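(* Let $(R_\theta,p_\theta)_{\theta\in\Theta}$ be an incentive compatible menu with $\int_\Theta V_\theta(R_\theta,p_\theta)\,d\mu\ge0$. Then $(R_\theta,p_\theta)_{\theta\in\Theta}$ is individually rational if and only if $U_{\underline\theta}(R_{\underline\theta},p_{\underline\theta})\ge U_{\underline\theta}(L_{\underline\theta},0)$.
   Context: Setting (Yaari dual-utility insurance model). $(S,\Sigma,\mathbb P)$ is a probability space. Types: $\Theta=[\underline\theta,\bar\theta]$ with Borel $\sigma$-algebra and a probability measure $\mu$ with a Lebesgue density $q$. Fix $\bar L<\infty$. For each $\theta$ the type-$\theta$ agent faces a loss $L_\theta$ (bounded, $\Sigma$-measurable, values in $[0,\bar L]$) with continuous distribution function $F_\theta(l)=\mathbb P(L_\theta\le l)$. Retention functions: $\mathcal R=\{R:[0,\bar L]\to[0,\bar L]: R(0)=0,\ 0\le\partial R(l)/\partial l\le1\}$. A menu is a family $(R_\theta,p_\theta)_{\theta\in\Theta}$ with $R_\theta\in\mathcal R$, $p_\theta\in\mathbb R$. A distortion function is a nondecreasing $g:[0,1]\to[0,1]$ with $g(0)=0,g(1)=1$; type $\theta$ has distortion $g_\theta$ (with $g'_\theta$ the derivative in $t$), the insurer $g^{In}$. Utilities: $U_\theta(R,p)=-p-\int_0^{\bar L}[1-g_\theta(F_\theta(l))]\frac{\partial R(l)}{\partial l}dl$, $V_\theta(R,p)=p-\int_0^{\bar L}[1-g^{In}(F_\theta(l))](1-\frac{\partial R(l)}{\partial l})dl$, no-insurance utility $U_\theta(L_\theta,0)=-\int_0^{\bar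 L}[1-g_\theta(F_\theta(l))]dl$. Throughout, for every menu the maps $\theta\mapsto U_\theta(R_\theta,p_\theta)$, $\theta\mapsto V_\theta(R_\theta,p_\theta)$ lie in $L^1(\Theta,\mu)$. Individually rational: (P1) $U_\theta(R_\theta,p_\theta)\ge U_\theta(L_\theta,0)$ for all $\theta$ and (P2) $\int_\Theta V_\theta(R_\theta,p_\theta)d\mu\ge0$. Incentive compatible: $U_\theta(R_\theta,p_\theta)\ge U_\theta(R_{\theta'},p_{\theta'})$ for all $\theta,\theta'$. Standing assumptions: (A1) $g^{In}(t)\ge g_\theta(t)$ for all $t,\theta$. (A2) $\theta\mapsto F_\theta(l)$ differentiable, $\{F_\theta\}$ uniformly Lipschitz in $\theta$, $\partial F_\theta(l)/\partial\theta\le0$ for all $l$. (A3) each $g_\theta$ differentiable with $g'_\theta\le\delta$ for a common $\delta<\infty$; $\theta\mapsto g_\theta(t)$ differentiable, uniformly Lipschitz in $\theta$; $\partial g_\theta(t)/\partial\theta\le0$ for $t\in(0,1)$. *)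

theory Defs
  imports "HOL-Analysis.Analysis" "HOL-Probability.Probability"
begin

definition distF :: "'s measure \<Rightarrow> (real \<Rightarrow> 's \<Rightarrow> real) \<Rightarrow> real \<Rightarrow> real \<Rightarrow> real" where
  "distF P L th l = measure P {s \<in> space P. L th s \<le> l}"

definition dRet :: "real \<Rightarrow> (real \<Rightarrow> real) \<Rightarrow> real \<Rightarrow> real" where
  "dRet Lbar R l = vector_derivative R (at l within {0..Lbar})"

definition retention :: "real \<Rightarrow> (real \<Rightarrow> real) set" where
  "retention Lbar = {R. R 0 = 0 \<and> (\<forall>l\<in>{0..Lbar}. R l \<in> {0..Lbar}) \<and>
      (\<forall>l\<in>{0..Lbar}. \<exists>D. (R has_real_derivative D) (at l within {0..Lbar}) \<and> 0 \<le> D \<and> D \<le> 1)}"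

definition distortion :: "(real \<Rightarrow> real) \<Rightarrow> bool" where
  "distortion g \<longleftrightarrow> g 0 = 0 \<and> g 1 = 1 \<and> mono_on {0..1} g \<and> (\<forall>t\<in>{0..1}. g t \<in> {0..1})"

definition Uag :: "real \<Rightarrow> (real \<Rightarrow> real \<Rightarrow> real) \<Rightarrow> (real \<Rightarrow> real \<Rightarrow> real) \<Rightarrow> real
    \<Rightarrow> (real \<Rightarrow> real) \<Rightarrow> real \<Rightarrow> real" where
  "Uag Lbar g F th R p = - p - integral {0..Lbar} (\<lambda>l. (1 - g th (F th l)) * dRet Lbar R l)"

text \<open>No-insurance utility U_th(L_th, 0).\<close>
definition Unoins :: "real \<Rightarrow> (real \<Rightarrow> real \<Rightarrow> real) \<Rightarrow> (real \<Rightarrow> real \<Rightarrow> real) \<Rightarrow> real \<Rightarrow> real" where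
  "Unoins Lbar g F th = - integral {0..Lbar} (\<lambda>l. 1 - g th (F th l))"

definition Vins :: "real \<Rightarrow> (real \<Rightarrow> real) \<Rightarrow> (real \<Rightarrow> real \<Rightarrow> real) \<Rightarrow> real
    \<Rightarrow> (real \<Rightarrow> real) \<Rightarrow> real \<Rightarrow> real" where
  "Vins Lbar gIn F th R p = p - integral {0..Lbar} (\<lambda>l. (1 - gIn (F th l)) * (1 - dRet Lbar R l))"

definition incentive_compatible :: "real \<Rightarrow> (real \<Rightarrow> real \<Rightarrow> real) \<Rightarrow> (real \<Rightarrow> real \<Rightarrow> real)
    \<Rightarrow> real set \<Rightarrow> (real \<Rightarrow> real \<Rightarrow> real) \<Rightarrow> (real \<Rightarrow> real) \<Rightarrow> bool" where
  "incentive_compatible Lbar g F Th Rm pm \<longleftrightarrow>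
     (\<forall>th\<in>Th. \<forall>th'\<in>Th. Uag Lbar g F th (Rm th) (pm th) \<ge> Uag Lbar g F th (Rm th') (pm th'))"

definition individually_rational :: "real \<Rightarrow> (real \<Rightarrow> real \<Rightarrow> real) \<Rightarrow> (real \<Rightarrow> real) \<Rightarrow> (real \<Rightarrow> real \<Rightarrow> real)
    \<Rightarrow> real set \<Rightarrow> real measure \<Rightarrow> (real \<Rightarrow> real \<Rightarrow> real) \<Rightarrow> (real \<Rightarrow> real) \<Rightarrow> bool" where
  "individually_rational Lbar g gIn F Th mu Rm pm \<longleftrightarrow>
     (\<forall>th\<in>Th. Uag Lbar g F th (Rm th) (pm th) \<ge> Unoins Lbar g F th) \<and>
     (\<integral>th. Vins Lbar gIn F th (Rm th) (pm th) \<partial>mu) \<ge> 0"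

end

theory Submission
  imports Defs
begin

lemma dRet_facts:
  assumes R: "R \<in> retention Lbar" and Lb: "0 < Lbar"
  shows "dRet Lbar R integrable_on {0..Lbar}" "\<And>l. l \<in> {0..Lbar} \<Longrightarrow> 0 \<le> dRet Lbar R l \<and> dRet Lbar R l \<le> 1"
proof -
  have ex: "\<exists>D. (R has_vector_derivative D) (at l within {0..Lbar}) \<and> 0 \<le> D \<and> D \<le> 1" if "l \<in> {0..Lbar}" for l
    using R that unfolding retention_def has_real_derivative_iff_has_vector_derivative by blast
  have dv: "(R has_vector_derivative dRet Lbar R l) (at l within {0..Lbar}) \<and> 0 \<le> dRet Lbar R l \<and> dRet Lbar R l \<le> 1"
    if lin: "l \<in> {0..Lbar}" for l
  proof -
    obtain D where D: "(R has_vector_derivative D) (at l within {0..Lbar})" "0 \<le> D" "D \<le> 1"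
      using ex[OF lin] by blast
    have "dRet Lbar R l = D" unfolding dRet_def
      using vector_derivative_within_closed_interval[OF Lb lin D(1)] .
    then show ?thesis using D by simp
  qed
  show "\<And>l. l \<in> {0..Lbar} \<Longrightarrow> 0 \<le> dRet Lbar R l \<and> dRet Lbar R l \<le> 1" using dv by blast
  have "(dRet Lbar R has_integral R Lbar - R 0) {0..Lbar}"
    by (rule fundamental_theorem_of_calculus) (use Lb dv in auto)
  then show "dRet Lbar R integrable_on {0..Lbar}" by blast
qed

lemma key_ineq:
  fixes h1 h2 d :: "real \<Rightarrow> real"
  assumes ab: "a \<le> b" and c1: "continuous_on {a..b} h1" and c2: "continuous_on {a..b} h2"
    and di: "a < b \<Longrightarrow> d integrable_on {a..b}"
    and d01: "\<And>x. a < b \<Longrightarrow> x \<in> {a..b} \<Longrightarrow> 0 \<le> d x \<and> d x \<le> 1"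
    and le: "\<And>x. x \<in> {a..b} \<Longrightarrow> h1 x \<le> h2 x"
  shows "integral {a..b} h1 - integral {a..b} (\<lambda>l. h1 l * d l)
         \<le> integral {a..b} h2 - integral {a..b} (\<lambda>l. h2 l * d l)"
proof (cases "a = b")
  case True then show ?thesis by simp
next
  case False
  then have "a < b" using ab by simp
  have dai: "d absolutely_integrable_on {a..b}"
    using nonnegative_absolutely_integrable_1[OF di[OF \<open>a<b\<close>]] d01 \<open>a<b\<close> by blast
  have prod: "(\<lambda>l. h l * d l) integrable_on {a..b}" if "continuous_on {a..b} h" for h
  proof -
    have "(\<lambda>l. h l * d l) absolutely_integrable_on {a..b}"
    proof (rule absolutely_integrable_bounded_measurable_product_real)
      show "h \<in> borel_measurable (lebesgue_on {a..b})"
        using continuous_imp_measurable_on_sets_lebesgue[OF that] by simp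
      show "bounded (h ` {a..b})"
        using compact_continuous_image[OF that] compact_imp_bounded by blast
    qed (use dai in auto)
    then show ?thesis using absolutely_integrable_on_def by blast
  qed
  have i1: "h1 integrable_on {a..b}" using c1 integrable_continuous_real by blast
  have i2: "h2 integrable_on {a..b}" using c2 integrable_continuous_real by blast
  have p1: "(\<lambda>l. h1 l * d l) integrable_on {a..b}" using prod c1 by blast
  have p2: "(\<lambda>l. h2 l * d l) integrable_on {a..b}" using prod c2 by blast
  have eq: "(\<lambda>l. (h2 l - h1 l) * (1 - d l)) = (\<lambda>l. (h2 l - h2 l * d l) - (h1 l - h1 l * d l))"
    by (auto simp: algebra_simps)
  have "0 \<le> integral {a..b} (\<lambda>l. (h2 l - h1 l) * (1 - d l))"
    apply (rule integral_nonneg)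
    subgoal unfolding eq using i1 i2 p1 p2 by (intro integrable_diff)
    using le d01 \<open>a<b\<close> by auto
  also have "\<dots> = (integral {a..b} h2 - integral {a..b} (\<lambda>l. h2 l * d l)) - (integral {a..b} h1 - integral {a..b} (\<lambda>l. h1 l * d l))"
    unfolding eq using i1 i2 p1 p2
    by (simp add: integral_diff integrable_diff)
  finally show ?thesis by simp
qed

lemma decr:
  fixes f :: "real \<Rightarrow> real"
  assumes der: "\<And>x. x \<in> {a..b} \<Longrightarrow> \<exists>D. (f has_real_derivative D) (at x within {a..b}) \<and> (x \<in> {a<..<b} \<longrightarrow> D \<le> 0)"
    and x: "x \<in> {a..b}" and y: "y \<in> {a..b}" and xy: "x \<le> y"
  shows "f y \<le> f x"
proof -
  have cont: "continuous_on {a..b} f"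
  proof -
    have "\<forall>x\<in>{a..b}. \<exists>D. (f has_real_derivative D) (at x within {a..b})" using der by blast
    then obtain D where "\<And>x. x \<in> {a..b} \<Longrightarrow> (f has_real_derivative D x) (at x within {a..b})" by metis
    then show ?thesis by (rule DERIV_continuous_on)
  qed
  show ?thesis
  proof (rule DERIV_nonpos_imp_decreasing_open[OF xy])
    fix z assume z: "x < z" "z < y"
    then have zi: "z \<in> {a<..<b}" using x y by auto
    then have "at z within {a..b} = at z" by (intro at_within_interior) auto
    then show "\<exists>D. (f has_real_derivative D) (at z) \<and> D \<le> 0" using der[of z] zi by auto
  next
    show "continuous_on {x..y} f" using x y by (intro continuous_on_subset[OF cont]) auto
  qed
qed
theorem proposition4:
  fixes P :: "'s measure" and L :: "real \<Rightarrow> 's \<Rightarrow> real"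
    and th_lo th_hi Lbar :: real
    and mu :: "real measure" and q :: "real \<Rightarrow> real"
    and g :: "real \<Rightarrow> real \<Rightarrow> real" and gIn :: "real \<Rightarrow> real"
    and Rm :: "real \<Rightarrow> real \<Rightarrow> real" and pm :: "real \<Rightarrow> real"
  defines "F \<equiv> distF P L"
  assumes P: "prob_space P"
    and Th: "th_lo < th_hi"
    and Lbar: "0 \<le> Lbar"
    and mu_def: "mu = density (restrict_space lborel {th_lo..th_hi}) (\<lambda>th. ennreal (q th))"
    and q_meas: "q \<in> borel_measurable lborel" and q_nonneg: "\<And>th. q th \<ge> 0"
    and mu_prob: "prob_space mu"
    and L_meas: "\<And>th. th \<in> {th_lo..th_hi} \<Longrightarrow> L th \<in> borel_measurable P"
    and L_range: "\<And>th s. th \<in> {th_lo..th_hi} \<Longrightarrow> s \<in> space P \<Longrightarrow> L th s \<in> {0..Lbar}"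
    and F_cont: "\<And>th. th \<in> {th_lo..th_hi} \<Longrightarrow> continuous_on UNIV (F th)"
    and g_dist: "\<And>th. th \<in> {th_lo..th_hi} \<Longrightarrow> distortion (g th)"
    and gIn_dist: "distortion gIn"
    \<comment> \<open>(A1)\<close>
    and A1: "\<And>th t. th \<in> {th_lo..th_hi} \<Longrightarrow> t \<in> {0..1} \<Longrightarrow> gIn t \<ge> g th t"
    \<comment> \<open>(A2)\<close>
    and A2_diff: "\<And>th l. th \<in> {th_lo..th_hi} \<Longrightarrow>
        \<exists>D. ((\<lambda>x. F x l) has_real_derivative D) (at th within {th_lo..th_hi}) \<and> D \<le> 0"
    and A2_lip: "\<exists>K. \<forall>l. \<forall>th\<in>{th_lo..th_hi}. \<forall>th'\<in>{th_lo..th_hi}.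
        \<bar>F th l - F th' l\<bar> \<le> K * \<bar>th - th'\<bar>"
    \<comment> \<open>(A3)\<close>
    and A3_dt: "\<exists>\<delta>. \<forall>th\<in>{th_lo..th_hi}. \<forall>t\<in>{0..1}.
        \<exists>D. (g th has_real_derivative D) (at t within {0..1}) \<and> D \<le> \<delta>"
    and A3_dth: "\<And>th t. th \<in> {th_lo..th_hi} \<Longrightarrow> t \<in> {0..1} \<Longrightarrow>
        \<exists>D. ((\<lambda>x. g x t) has_real_derivative D) (at th within {th_lo..th_hi}) \<and>
            (t \<in> {0<..<1} \<longrightarrow> D \<le> 0)"
    and A3_lip: "\<exists>K. \<forall>t\<in>{0..1}. \<forall>th\<in>{th_lo..th_hi}. \<forall>th'\<in>{th_lo..th_hi}.
        \<bar>g th t - g th' t\<bar> \<le> K * \<bar>th - th'\<bar>"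
    \<comment> \<open>the menu\<close>
    and menu: "\<And>th. th \<in> {th_lo..th_hi} \<Longrightarrow> Rm th \<in> retention Lbar"
    and U_int: "integrable mu (\<lambda>th. Uag Lbar g F th (Rm th) (pm th))"
    and V_int: "integrable mu (\<lambda>th. Vins Lbar gIn F th (Rm th) (pm th))"
    and IC: "incentive_compatible Lbar g F {th_lo..th_hi} Rm pm"
    and P2: "(\<integral>th. Vins Lbar gIn F th (Rm th) (pm th) \<partial>mu) \<ge> 0"
  shows "individually_rational Lbar g gIn F {th_lo..th_hi} mu Rm pm \<longleftrightarrow>
         Uag Lbar g F th_lo (Rm th_lo) (pm th_lo) \<ge> Unoins Lbar g F th_lo"
proof -
  let ?I = "{th_lo..th_hi}"
  have F01: "0 \<le> F th l \<and> F th l \<le> 1" for th l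
    unfolding F_def distF_def using prob_space.prob_le_1[OF P] by auto
  have Fdec: "F th l \<le> F th_lo l" if th: "th \<in> ?I" for th l
    by (rule decr[where f="\<lambda>x. F x l" and a=th_lo and b=th_hi]) (use A2_diff th Th in auto)
  have gdec: "g th t \<le> g th_lo t" if th: "th \<in> ?I" and t: "t \<in> {0..1}" for th t
  proof (cases "t \<in> {0<..<1}")
    case True
    show ?thesis
      by (rule decr[where f="\<lambda>x. g x t" and a=th_lo and b=th_hi]) (use A3_dth[of _ t] t th Th True in auto)
  next
    case False
    then have "t = 0 \<or> t = 1" using t by auto
    moreover have "th_lo \<in> ?I" using Th by auto
    ultimately show ?thesis using g_dist[OF th] g_dist[of th_lo] unfolding distortion_def by auto
  qed
  have gmono: "g th s \<le> g th t" if th: "th \<in> ?I" and "s \<in> {0..1}" "t \<in> {0..1}" "s \<le> t" for th s t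
    using g_dist[OF th] that unfolding distortion_def by (meson mono_onD)
  obtain \<delta> where \<delta>: "\<forall>th\<in>?I. \<forall>t\<in>{0..1}. \<exists>D. (g th has_real_derivative D) (at t within {0..1}) \<and> D \<le> \<delta>"
    using A3_dt by blast
  have gcont: "continuous_on {0..1} (g th)" if th: "th \<in> ?I" for th
  proof -
    have "\<forall>t\<in>{0..1}. \<exists>D. (g th has_real_derivative D) (at t within {0..1})" using \<delta> th by blast
    then obtain D where "\<And>t. t \<in> {0..1} \<Longrightarrow> (g th has_real_derivative D t) (at t within {0..1})" by metis
    then show ?thesis by (rule DERIV_continuous_on)
  qed
  have hcont: "continuous_on {0..Lbar} (\<lambda>l. 1 - g th (F th l))" if th: "th \<in> ?I" for th
  proof -
    have "continuous_on {0..Lbar} (\<lambda>l. g th (F th l))"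
      by (rule continuous_on_compose2[OF gcont[OF th] continuous_on_subset[OF F_cont[OF th]]])
         (use F01 in auto)
    then show ?thesis by (intro continuous_intros)
  qed
  have lo: "th_lo \<in> ?I" using Th by auto
  show ?thesis
  proof
    assume "individually_rational Lbar g gIn F ?I mu Rm pm"
    then show "Uag Lbar g F th_lo (Rm th_lo) (pm th_lo) \<ge> Unoins Lbar g F th_lo"
      unfolding individually_rational_def using lo by blast
  next
    assume H: "Uag Lbar g F th_lo (Rm th_lo) (pm th_lo) \<ge> Unoins Lbar g F th_lo"
    have "Uag Lbar g F th (Rm th) (pm th) \<ge> Unoins Lbar g F th" if th: "th \<in> ?I" for th
    proof -
      have R: "Rm th_lo \<in> retention Lbar" using menu lo by blast
      have k: "integral {0..Lbar} (\<lambda>l. 1 - g th_lo (F th_lo l)) - integral {0..Lbar} (\<lambda>l. (1 - g th_lo (F th_lo l)) * dRet Lbar (Rm th_lo) l)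
         \<le> integral {0..Lbar} (\<lambda>l. 1 - g th (F th l)) - integral {0..Lbar} (\<lambda>l. (1 - g th (F th l)) * dRet Lbar (Rm th_lo) l)"
      proof (rule key_ineq[of 0 Lbar "\<lambda>l. 1 - g th_lo (F th_lo l)" "\<lambda>l. 1 - g th (F th l)"])
        show "continuous_on {0..Lbar} (\<lambda>l. 1 - g th_lo (F th_lo l))" using hcont lo by blast
        show "continuous_on {0..Lbar} (\<lambda>l. 1 - g th (F th l))" using hcont th by blast
        show "0 < Lbar \<Longrightarrow> dRet Lbar (Rm th_lo) integrable_on {0..Lbar}" using dRet_facts(1)[OF R] by blast
        show "0 \<le> dRet Lbar (Rm th_lo) x \<and> dRet Lbar (Rm th_lo) x \<le> 1" if "0 < Lbar" "x \<in> {0..Lbar}" for x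
          using dRet_facts(2)[OF R] that by auto
        show "1 - g th_lo (F th_lo x) \<le> 1 - g th (F th x)" if "x \<in> {0..Lbar}" for x
        proof -
          have "g th (F th x) \<le> g th (F th_lo x)" by (rule gmono[OF th]) (use F01[of th x] F01[of th_lo x] Fdec[OF th, of x] in auto)
          also have "\<dots> \<le> g th_lo (F th_lo x)" by (rule gdec[OF th]) (use F01[of th_lo x] in auto)
          finally show ?thesis by simp
        qed
      qed (use Lbar in auto)
      have "Uag Lbar g F th (Rm th_lo) (pm th_lo) \<ge> Unoins Lbar g F th"
        using H k unfolding Uag_def Unoins_def by simp
      moreover have "Uag Lbar g F th (Rm th) (pm th) \<ge> Uag Lbar g F th (Rm th_lo) (pm th_lo)"
        using IC th lo unfolding incentive_compatible_def by blast
      ultimately show ?thesis by linarith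
    qed
    then show "individually_rational Lbar g gIn F ?I mu Rm pm"
      unfolding individually_rational_def using P2 by blast
  qed
qed

end
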